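(* Let $n\ge 3$. For every set $S$ of $n$ red and blue points in the plane in general position containing at least one point of each color, every edge of every minimum bichromatic spanning tree of $S$ crosses at most $n-3$ other edges of that tree. Moreover, this bound is best possible: for every $n\ge 3$ there exists a set of $n$ red and blue points in general position having a minimum bichromatic spanning tree in which some edge crosses exactly $n-3$ other edges.
   Context: A set of points is in general position if no three of them are collinear. A bichromatic spanning tree of a set $S$ of red and blue points is a spanning tree on vertex set $S$, drawn with straight-line segment edges, in which every edge has one red and one blue endpoint. A minimum bichromatic spanning tree (MinBST) is a bichromatic spanning tree of minimum total Euclidean edge length. Two edges (segments) cross if they share a point that is interior to both segments. *)

theory Defs
  imports "HOL-Analysis.Analysis"
begin

type_synonym point = "real^2"

definition general_position :: "point set \<Rightarrow> bool" where
  "general_position S \<longleftrightarrow>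
     (\<forall>a\<in>S. \<forall>b\<in>S. \<forall>c\<in>S. a \<noteq> b \<and> b \<noteq> c \<and> a \<noteq> c \<longrightarrow> \<not> collinear {a, b, c})"

definition is_edge_on :: "point set \<Rightarrow> point set \<Rightarrow> bool" where
  "is_edge_on S e \<longleftrightarrow> (\<exists>a b. a \<in> S \<and> b \<in> S \<and> a \<noteq> b \<and> e = {a, b})"

definition connected_graph :: "point set \<Rightarrow> point set set \<Rightarrow> bool" where
  "connected_graph S T \<longleftrightarrow>
     (\<forall>u\<in>S. \<forall>v\<in>S. (u, v) \<in> {(x, y). {x, y} \<in> T \<and> x \<noteq> y}\<^sup>*)"

definition spanning_tree :: "point set \<Rightarrow> point set set \<Rightarrow> bool" where
  "spanning_tree S T \<longleftrightarrow>
     (\<forall>e\<in>T. is_edge_on S e) \<and> connected_graph S T \<and>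
     (\<forall>e\<in>T. \<not> connected_graph S (T - {e}))"

definition bichromatic_spanning_tree ::
    "point set \<Rightarrow> (point \<Rightarrow> bool) \<Rightarrow> point set set \<Rightarrow> bool" where
  "bichromatic_spanning_tree S red T \<longleftrightarrow>
     spanning_tree S T \<and> (\<forall>e\<in>T. \<exists>a b. e = {a, b} \<and> red a \<and> \<not> red b)"

definition edge_length :: "point set \<Rightarrow> real" where
  "edge_length e = (THE d. \<exists>a b. e = {a, b} \<and> d = dist a b)"

definition tree_length :: "point set set \<Rightarrow> real" where
  "tree_length T = (\<Sum>e\<in>T. edge_length e)"

definition min_bichromatic_spanning_tree ::
    "point set \<Rightarrow> (point \<Rightarrow> bool) \<Rightarrow> point set set \<Rightarrow> bool" where
  "min_bichromatic_spanning_tree S red T \<longleftrightarrow>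
     bichromatic_spanning_tree S red T \<and>
     (\<forall>T'. bichromatic_spanning_tree S red T' \<longrightarrow> tree_length T \<le> tree_length T')"

definition edges_cross :: "point set \<Rightarrow> point set \<Rightarrow> bool" where
  "edges_cross e f \<longleftrightarrow> (\<exists>a b c d. e = {a, b} \<and> f = {c, d} \<and>
       open_segment a b \<inter> open_segment c d \<noteq> {})"

definition crossing_number :: "point set set \<Rightarrow> point set \<Rightarrow> nat" where
  "crossing_number T e = card {f \<in> T. f \<noteq> e \<and> edges_cross e f}"

end

theory Submission
  imports Defs
begin

lemma dist2: "dist (x::real^2) y = sqrt ((x$1-y$1)^2 + (x$2-y$2)^2)"
  by (simp add: dist_vec_def L2_set_def sum_2 dist_real_def)

lemma collinear_det:
  assumes "collinear {a,b,c::real^2}"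
  shows "(b$1-a$1)*(c$2-a$2) = (b$2-a$2)*(c$1-a$1)"
proof -
  from assms obtain u where u: "\<forall>x\<in>{a,b,c}. \<forall>y\<in>{a,b,c}. \<exists>k. x - y = k *\<^sub>R u"
    unfolding collinear_def by blast
  then obtain k1 k2 where k: "b - a = k1 *\<^sub>R u" "c - a = k2 *\<^sub>R u" by blast
  have e1: "b$1 - a$1 = k1 * u$1" using arg_cong[OF k(1), of "\<lambda>v. v$1"] by simp
  have e2: "b$2 - a$2 = k1 * u$2" using arg_cong[OF k(1), of "\<lambda>v. v$2"] by simp
  have e3: "c$1 - a$1 = k2 * u$1" using arg_cong[OF k(2), of "\<lambda>v. v$1"] by simp
  have e4: "c$2 - a$2 = k2 * u$2" using arg_cong[OF k(2), of "\<lambda>v. v$2"] by simp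
  show ?thesis unfolding e1 e2 e3 e4 by (simp add: algebra_simps)
qed

lemma shared_cross_collinear:
  fixes a b d :: "real^2"
  assumes "open_segment a b \<inter> open_segment a d \<noteq> {}"
  shows "collinear {a,b,d}"
proof -
  from assms obtain p where "p \<in> open_segment a b" "p \<in> open_segment a d" by blast
  then obtain u v where uv: "0<u" "u<1" "p = (1-u)*\<^sub>R a + u *\<^sub>R b" "0<v" "v<1" "p = (1-v)*\<^sub>R a + v *\<^sub>R d"
    unfolding in_segment by blast
  then have "u *\<^sub>R (b - a) = v *\<^sub>R (d - a)" by (simp add: algebra_simps)
  then have "(1/v) *\<^sub>R (u *\<^sub>R (b - a)) = (1/v) *\<^sub>R (v *\<^sub>R (d - a))" by simp
  then have "d - a = (u/v) *\<^sub>R (b - a)" using uv by (simp add: divide_inverse_commute)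
  then have "d = a + (u/v) *\<^sub>R (b - a)" by (simp add: algebra_simps)
  then have h3: "\<exists>c. d = a + c *\<^sub>R (b - a)" by blast
  have h1: "\<exists>c. a = a + c *\<^sub>R (b - a)" by (rule exI[where x=0]) simp
  have h2: "\<exists>c. b = a + c *\<^sub>R (b - a)" by (rule exI[where x=1]) simp
  have "\<forall>x\<in>{a,b,d}. \<exists>c. x = a + c *\<^sub>R (b - a)"
    using h1 h2 h3 by simp
  then show ?thesis unfolding collinear_alt by (intro exI[where x=a] exI[where x="b-a"])
qed

definition grel :: "point set set \<Rightarrow> (point \<times> point) set" where
  "grel T = {(x, y). {x, y} \<in> T \<and> x \<noteq> y}"

lemma connected_graph_grel: "connected_graph S T \<longleftrightarrow> (\<forall>u\<in>S. \<forall>v\<in>S. (u, v) \<in> (grel T)\<^sup>*)"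
  unfolding connected_graph_def grel_def by simp

lemma grel_sym: "(x,y) \<in> (grel T)\<^sup>* \<Longrightarrow> (y,x) \<in> (grel T)\<^sup>*"
proof -
  have "sym (grel T)" unfolding grel_def sym_def by (auto simp: insert_commute)
  then have "sym ((grel T)\<^sup>*)" by (rule sym_rtrancl)
  then show "(x,y) \<in> (grel T)\<^sup>* \<Longrightarrow> (y,x) \<in> (grel T)\<^sup>*" by (auto dest: symD)
qed

lemma grel_mono: "T \<subseteq> T' \<Longrightarrow> (grel T)\<^sup>* \<subseteq> (grel T')\<^sup>*"
  unfolding grel_def by (rule rtrancl_mono) auto

lemma closed_reach:
  assumes cl: "\<And>x y. {x,y} \<in> T \<Longrightarrow> x \<noteq> y \<Longrightarrow> x \<in> X \<Longrightarrow> y \<in> X"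
    and r: "(u,v) \<in> (grel T)\<^sup>*" and u: "u \<in> X"
  shows "v \<in> X"
  using r u
proof (induction rule: rtrancl_induct)
  case base then show ?case by simp
next
  case (step y z) then show ?case using cl unfolding grel_def by auto
qed

definition gcomp :: "point set \<Rightarrow> point set set \<Rightarrow> point \<Rightarrow> point set" where
  "gcomp S T x = {y \<in> S. (x, y) \<in> (grel T)\<^sup>*}"

lemma comp_eq: "(x,y) \<in> (grel T)\<^sup>* \<Longrightarrow> gcomp S T x = gcomp S T y"
  unfolding gcomp_def using grel_sym
  by (auto intro: rtrancl_trans)

lemma forest_count:
  assumes "finite T" "finite S"
  shows "(\<forall>e\<in>T. is_edge_on S e) \<Longrightarrow>
         (\<forall>a b. {a,b} \<in> T \<longrightarrow> a \<noteq> b \<longrightarrow> (a,b) \<notin> (grel (T - {{a,b}}))\<^sup>*) \<Longrightarrow>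
         card (gcomp S T ` S) + card T \<le> card S"
  using assms(1)
proof (induction T rule: finite_induct)
  case empty
  have "grel {} = {}" unfolding grel_def by auto
  then have "gcomp S {} ` S = (\<lambda>x. {x}) ` S" unfolding gcomp_def by auto
  moreover have "card ((\<lambda>x. {x}) ` S) = card S" by (rule card_image) (auto simp: inj_on_def)
  ultimately show ?case by simp
next
  case (insert f F)
  have IH: "card (gcomp S F ` S) + card F \<le> card S"
  proof (rule insert.IH)
    show "\<forall>e\<in>F. is_edge_on S e" using insert.prems by auto
    show "\<forall>a b. {a,b} \<in> F \<longrightarrow> a \<noteq> b \<longrightarrow> (a,b) \<notin> (grel (F - {{a,b}}))\<^sup>*"
    proof (intro allI impI)
      fix a b assume ab: "{a,b} \<in> F" "a \<noteq> b"
      have "(a,b) \<notin> (grel (insert f F - {{a,b}}))\<^sup>*" using insert.prems(2) ab by auto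
      moreover have "(grel (F - {{a,b}}))\<^sup>* \<subseteq> (grel (insert f F - {{a,b}}))\<^sup>*"
        by (rule grel_mono) auto
      ultimately show "(a,b) \<notin> (grel (F - {{a,b}}))\<^sup>*" by blast
    qed
  qed
  obtain a b where ab: "a \<in> S" "b \<in> S" "a \<noteq> b" "f = {a,b}"
    using insert.prems(1) unfolding is_edge_on_def by auto
  have "insert f F - {{a,b}} = F" using insert.hyps(2) ab(4) by auto
  then have nab: "(a,b) \<notin> (grel F)\<^sup>*" using insert.prems(2) ab by auto
  define G where "G = insert f F"
  have FG: "(grel F)\<^sup>* \<subseteq> (grel G)\<^sup>*" unfolding G_def by (rule grel_mono) auto
  define h where "h = (\<lambda>C. gcomp S G (SOME x. x \<in> C))"
  have hx: "h (gcomp S F x) = gcomp S G x" if "x \<in> S" for x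
  proof -
    have "x \<in> gcomp S F x" using that unfolding gcomp_def by auto
    then have "(SOME y. y \<in> gcomp S F x) \<in> gcomp S F x" by (rule someI)
    then have "(x, SOME y. y \<in> gcomp S F x) \<in> (grel G)\<^sup>*" using FG unfolding gcomp_def by auto
    then show ?thesis unfolding h_def by (simp add: comp_eq)
  qed
  have "h ` (gcomp S F ` S) = (\<lambda>x. h (gcomp S F x)) ` S" by (simp add: image_image)
  also have "\<dots> = gcomp S G ` S" by (rule image_cong) (simp_all add: hx)
  finally have img: "gcomp S G ` S = h ` (gcomp S F ` S)" by simp
  have "(a,b) \<in> grel G" unfolding G_def grel_def using ab by auto
  then have "gcomp S G a = gcomp S G b" by (intro comp_eq) auto
  moreover have "gcomp S F a \<noteq> gcomp S F b"
  proof
    assume "gcomp S F a = gcomp S F b"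
    moreover have "b \<in> gcomp S F b" using ab unfolding gcomp_def by auto
    ultimately have "(a,b) \<in> (grel F)\<^sup>*" unfolding gcomp_def by auto
    with nab show False by simp
  qed
  ultimately have "\<not> inj_on h (gcomp S F ` S)"
  proof -
    assume e1: "gcomp S G a = gcomp S G b" and e2: "gcomp S F a \<noteq> gcomp S F b"
    have "h (gcomp S F a) = h (gcomp S F b)" using hx[OF ab(1)] hx[OF ab(2)] e1 by simp
    moreover have "gcomp S F a \<in> gcomp S F ` S" "gcomp S F b \<in> gcomp S F ` S" using ab by auto
    ultimately show ?thesis using e2 unfolding inj_on_def by blast
  qed
  then have "card (h ` (gcomp S F ` S)) \<noteq> card (gcomp S F ` S)"
    using inj_on_iff_eq_card[of "gcomp S F ` S" h] assms(2) by auto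
  moreover have "card (h ` (gcomp S F ` S)) \<le> card (gcomp S F ` S)"
    using assms(2) by (intro card_image_le) auto
  ultimately have "card (gcomp S G ` S) < card (gcomp S F ` S)" using img by auto
  moreover have "card G = card F + 1" unfolding G_def using insert.hyps by simp
  ultimately show ?case using IH unfolding G_def by linarith
qed

lemma tree_bridge:
  assumes "spanning_tree S T" "{a,b} \<in> T" "a \<noteq> b"
  shows "(a,b) \<notin> (grel (T - {{a,b}}))\<^sup>*"
proof
  assume ab: "(a,b) \<in> (grel (T - {{a,b}}))\<^sup>*"
  let ?R = "(grel (T - {{a,b}}))\<^sup>*"
  have "grel T \<subseteq> ?R"
  proof
    fix p assume "p \<in> grel T"
    then obtain x y where p: "p = (x,y)" "{x,y} \<in> T" "x \<noteq> y" unfolding grel_def by auto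
    show "p \<in> ?R"
    proof (cases "{x,y} = {a,b}")
      case True
      then have "(x,y) = (a,b) \<or> (x,y) = (b,a)" by (auto simp: doubleton_eq_iff)
      then show ?thesis
      proof
        assume "(x,y) = (a,b)" then show ?thesis using ab p(1) by simp
      next
        assume "(x,y) = (b,a)" then show ?thesis using grel_sym[OF ab] p(1) by simp
      qed
    next
      case False
      then have "(x,y) \<in> grel (T - {{a,b}})" using p unfolding grel_def by auto
      then show ?thesis using p by auto
    qed
  qed
  then have "(grel T)\<^sup>* \<subseteq> ?R" by (rule rtrancl_subset_rtrancl)
  moreover have "connected_graph S T" using assms(1) unfolding spanning_tree_def by auto
  ultimately have "connected_graph S (T - {{a,b}})" unfolding connected_graph_grel by blast
  then show False using assms unfolding spanning_tree_def by auto
qed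

lemma tree_card:
  assumes "spanning_tree S T" "finite S" "S \<noteq> {}"
  shows "finite T" "card T + 1 \<le> card S"
proof -
  have edges: "\<forall>e\<in>T. is_edge_on S e" using assms(1) unfolding spanning_tree_def by auto
  then have "T \<subseteq> Pow S" unfolding is_edge_on_def by auto
  then show fin: "finite T" using finite_subset assms(2) by auto
  have "card (gcomp S T ` S) + card T \<le> card S"
  proof (rule forest_count[OF fin assms(2) edges])
    show "\<forall>a b. {a, b} \<in> T \<longrightarrow> a \<noteq> b \<longrightarrow> (a, b) \<notin> (grel (T - {{a, b}}))\<^sup>*"
      using tree_bridge[OF assms(1)] by simp
  qed
  moreover obtain s where s: "s \<in> S" using assms(3) by auto
  have conn: "connected_graph S T" using assms(1) unfolding spanning_tree_def by auto
  have "gcomp S T x = gcomp S T s" if "x \<in> S" for x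
  proof -
    have "(x,s) \<in> (grel T)\<^sup>*" using s that conn unfolding connected_graph_grel by simp
    then show ?thesis by (rule comp_eq)
  qed
  then have "gcomp S T ` S = {gcomp S T s}" using s by blast
  ultimately show "card T + 1 \<le> card S" by simp
qed


lemma no_cross_adjacent:
  assumes GP: "general_position S" and S: "a \<in> S" "b \<in> S" "c \<in> S"
    and d: "a \<noteq> b" "a \<noteq> c" "b \<noteq> c"
  shows "\<not> edges_cross {a,b} {a,c}"
proof
  assume "edges_cross {a,b} {a,c}"
  then obtain a' b' c' d' where h: "{a,b} = {a',b'}" "{a,c} = {c',d'}"
    "open_segment a' b' \<inter> open_segment c' d' \<noteq> {}" unfolding edges_cross_def by blast
  have "(a' = a \<and> b' = b) \<or> (a' = b \<and> b' = a)" using h(1) by (simp add: doubleton_eq_iff) blast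
  then have s1: "open_segment a' b' = open_segment a b" using open_segment_commute by blast
  have "(c' = a \<and> d' = c) \<or> (c' = c \<and> d' = a)" using h(2) by (simp add: doubleton_eq_iff) blast
  then have s2: "open_segment c' d' = open_segment a c" using open_segment_commute by blast
  have "open_segment a b \<inter> open_segment a c \<noteq> {}" using h(3) unfolding s1 s2 .
  then have "collinear {a,b,c}" by (rule shared_cross_collinear)
  then show False using GP S d unfolding general_position_def by blast
qed

lemma adj_no_cross:
  assumes GP: "general_position S" and e: "a \<in> S" "b \<in> S" "a \<noteq> b"
    and g: "x \<in> S" "y \<in> S" "x \<noteq> y" and ne: "{x,y} \<noteq> {a,b}"
    and sh: "x \<in> {a,b} \<or> y \<in> {a,b}"
  shows "\<not> edges_cross {a,b} {x,y}"
proof -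
  have c1: "\<not> edges_cross {a,b} {x,y}" if "x = a" using no_cross_adjacent[OF GP e(1,2) g(2)] that e g ne by auto
  have c2: "\<not> edges_cross {a,b} {x,y}" if "y = a" using no_cross_adjacent[OF GP e(1,2) g(1)] that e g ne by (auto simp: insert_commute)
  have c3: "\<not> edges_cross {a,b} {x,y}" if "x = b" using no_cross_adjacent[OF GP e(2,1) g(2)] that e g ne by (auto simp: insert_commute)
  have c4: "\<not> edges_cross {a,b} {x,y}" if "y = b" using no_cross_adjacent[OF GP e(2,1) g(1)] that e g ne by (auto simp: insert_commute)
  show ?thesis using sh c1 c2 c3 c4 by blast
qed

lemma part1:
  assumes fin: "finite S" and cS: "card S = n" and n3: "n \<ge> 3" and GP: "general_position S"
    and mt: "min_bichromatic_spanning_tree S red T" and eT: "e \<in> T"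
  shows "crossing_number T e \<le> n - 3"
proof -
  have st: "spanning_tree S T" using mt unfolding min_bichromatic_spanning_tree_def bichromatic_spanning_tree_def by simp
  have Sne: "S \<noteq> {}" using cS n3 by auto
  have finT: "finite T" and cT: "card T + 1 \<le> n" using tree_card[OF st fin Sne] cS by auto
  have edges: "\<forall>e\<in>T. is_edge_on S e" using st unfolding spanning_tree_def by simp
  obtain a b where ab: "a \<in> S" "b \<in> S" "a \<noteq> b" "e = {a,b}" using edges eT unfolding is_edge_on_def by blast
  obtain c where c: "c \<in> S" "c \<notin> {a,b}"
  proof -
    have "\<not> S \<subseteq> {a,b}"
    proof
      assume "S \<subseteq> {a,b}"
      then have "card S \<le> card {a,b}" by (intro card_mono) auto
      also have "\<dots> \<le> 2" by (simp add: card_insert_le_m1)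
      finally show False using cS n3 by simp
    qed
    then show ?thesis using that by blast
  qed
  have "\<exists>g. g \<in> T \<and> g \<noteq> e \<and> g \<inter> {a,b} \<noteq> {}"
  proof (rule ccontr)
    assume nog: "\<not> (\<exists>g. g \<in> T \<and> g \<noteq> e \<and> g \<inter> {a,b} \<noteq> {})"
    have cl: "y \<in> {a,b}" if "{x,y} \<in> T" "x \<noteq> y" "x \<in> {a,b}" for x y
    proof (cases "{x,y} = e")
      case True then show ?thesis using ab(4) by auto
    next
      case False
      then have "{x,y} \<inter> {a,b} = {}" using nog that by blast
      then show ?thesis using that(3) by auto
    qed
    have conn: "connected_graph S T" using st unfolding spanning_tree_def by simp
    then have ac: "(a,c) \<in> (grel T)\<^sup>*" using ab c unfolding connected_graph_grel by simp
    have "c \<in> {a,b}" using closed_reach[of T "{a,b}" a c, OF cl ac] by simp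
    with c show False by simp
  qed
  then obtain g where g: "g \<in> T" "g \<noteq> e" "g \<inter> {a,b} \<noteq> {}" by blast
  obtain x y where xy: "x \<in> S" "y \<in> S" "x \<noteq> y" "g = {x,y}" using edges g(1) unfolding is_edge_on_def by blast
  have ncg: "\<not> edges_cross e g"
    unfolding ab(4) xy(4)
  proof (rule adj_no_cross[OF GP ab(1-3) xy(1-3)])
    show "{x,y} \<noteq> {a,b}" using g(2) ab(4) xy(4) by simp
    show "x \<in> {a,b} \<or> y \<in> {a,b}" using g(3) xy(4) by blast
  qed
  have sub: "{f \<in> T. f \<noteq> e \<and> edges_cross e f} \<subseteq> T - {e,g}" using ncg by blast
  have "crossing_number T e \<le> card (T - {e,g})" unfolding crossing_number_def
    using finT sub by (intro card_mono) auto
  also have "card (T - {e,g}) = card T - 2" using finT eT g(1,2) by (simp add: card_Diff_subset)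
  finally show ?thesis using cT by simp
qed



definition r1 :: point where "r1 = vector [1/2, -10]"
definition r2 :: point where "r2 = vector [0, 0]"
definition bb :: point where "bb = vector [1/2, 3/2]"
definition W :: "real \<Rightarrow> point" where "W t = vector [1 + t^2, 2 + t]"
definition sp :: "nat \<Rightarrow> real" where "sp k = 1 - 1/(real k + 2)"
definition PP :: "nat \<Rightarrow> real set" where "PP m = sp ` {..<m}"

lemma comps [simp]:
  "r1$1 = 1/2" "r1$2 = -10" "r2$1 = 0" "r2$2 = 0" "bb$1 = 1/2" "bb$2 = 3/2"
  "W t $1 = 1 + t^2" "W t $2 = 2 + t"
  by (simp_all add: r1_def r2_def bb_def W_def)

lemma sp_bounds: "1/2 \<le> sp k" "sp k < 1"
proof -
  have "1/(real k + 2) \<le> 1/2" by (simp add: divide_le_eq)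
  then show "1/2 \<le> sp k" unfolding sp_def by simp
  show "sp k < 1" unfolding sp_def by simp
qed

lemma sp_inj: "inj sp"
  unfolding inj_def sp_def by (auto simp: divide_eq_eq)

lemma PP_bounds: "t \<in> PP m \<Longrightarrow> 1/2 \<le> t \<and> t < 1"
  unfolding PP_def using sp_bounds by auto

lemma PP_finite: "finite (PP m)" unfolding PP_def by simp

lemma PP_card: "card (PP m) = m"
  unfolding PP_def using sp_inj by (simp add: card_image inj_on_subset)

lemma W_inj: "W s = W t \<Longrightarrow> s = t"
proof -
  assume "W s = W t"
  then have "W s $ 2 = W t $ 2" by simp
  then show "s = t" by simp
qed

lemma W_ne: "W t \<noteq> r1" "W t \<noteq> r2" "W t \<noteq> bb"
proof -
  have h: "(1::real) + t^2 \<noteq> 1/2" "(1::real) + t^2 \<noteq> 0" using zero_le_power2[of t] by linarith+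
  show "W t \<noteq> r1" proof assume "W t = r1" then have "W t $ 1 = r1 $ 1" by simp then show False using h by simp qed
  show "W t \<noteq> r2" proof assume "W t = r2" then have "W t $ 1 = r2 $ 1" by simp then show False using h by simp qed
  show "W t \<noteq> bb" proof assume "W t = bb" then have "W t $ 1 = bb $ 1" by simp then show False using h by simp qed
qed

lemma spec_ne: "r1 \<noteq> r2" "r1 \<noteq> bb" "r2 \<noteq> bb"
proof -
  show "r1 \<noteq> r2" proof assume "r1 = r2" then have "r1 $ 1 = r2 $ 1" by simp then show False by simp qed
  show "r1 \<noteq> bb" proof assume "r1 = bb" then have "r1 $ 2 = bb $ 2" by simp then show False by simp qed
  show "r2 \<noteq> bb" proof assume "r2 = bb" then have "r2 $ 1 = bb $ 1" by simp then show False by simp qed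
qed

lemma ncA: "\<not> collinear {r1, r2, bb}"
proof
  assume "collinear {r1, r2, bb}"
  from collinear_det[OF this] show False by simp
qed

lemma ncB1: assumes "t \<in> PP m" shows "\<not> collinear {r1, r2, W t}"
proof
  assume "collinear {r1, r2, W t}"
  from collinear_det[OF this] have "(- 1/2) * (12 + t) = 10 * (1/2 + t^2)" by simp
  moreover have "t^2 \<ge> 0" by simp
  moreover have "t \<ge> 1/2" using PP_bounds[OF assms] by simp
  ultimately show False by (simp add: algebra_simps)
qed

lemma ncB2: assumes "t \<in> PP m" shows "\<not> collinear {r1, bb, W t}"
proof
  assume "collinear {r1, bb, W t}"
  from collinear_det[OF this] have "0 = (23/2) * (1/2 + t^2)" by simp
  moreover have "t^2 \<ge> 0" by simp
  ultimately show False by (simp add: algebra_simps)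
qed

lemma ncB3: assumes "t \<in> PP m" shows "\<not> collinear {r2, bb, W t}"
proof
  assume "collinear {r2, bb, W t}"
  from collinear_det[OF this] have e: "(1/2) * (2 + t) = (3/2) * (1 + t^2)" by simp
  have t: "1/2 \<le> t" "t < 1" using PP_bounds[OF assms] by auto
  have tt: "t * t \<ge> t * (1/2)" using t by (intro mult_left_mono) auto
  from e have "t * 2 = 2 + 6 * (t * t)" by (simp add: power2_eq_square algebra_simps)
  then show False using tt t by linarith
qed

lemma ncX:
  assumes "s \<noteq> t" "(1 - X$1) - (2 - X$2)*(s+t) - s*t \<noteq> 0"
  shows "\<not> collinear {X, W s, W t}"
proof
  assume "collinear {X, W s, W t}"
  from collinear_det[OF this]
  have e: "(1 + s^2 - X$1) * (2 + t - X$2) = (2 + s - X$2) * (1 + t^2 - X$1)" by simp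
  have "(t - s) * ((1 - X$1) - (2 - X$2)*(s+t) - s*t) =
        (1 + s^2 - X$1) * (2 + t - X$2) - (2 + s - X$2) * (1 + t^2 - X$1)"
    by (simp add: power2_eq_square algebra_simps)
  also have "\<dots> = 0" using e by simp
  finally show False using assms by simp
qed

lemma ncC:
  assumes "s \<in> PP m" "t \<in> PP m" "s \<noteq> t"
  shows "\<not> collinear {r1, W s, W t}" "\<not> collinear {r2, W s, W t}" "\<not> collinear {bb, W s, W t}"
proof -
  have b: "1/2 \<le> s" "1/2 \<le> t" using assms PP_bounds by auto
  have st: "s * t > 0" using b by simp
  have "1 - r1$1 - (2 - r1$2)*(s+t) - s*t < 0" using b st by (simp add: algebra_simps; linarith)
  then show "\<not> collinear {r1, W s, W t}" by (intro ncX assms(3)) simp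
  have "1 - r2$1 - (2 - r2$2)*(s+t) - s*t < 0" using b st by (simp add: algebra_simps; linarith)
  then show "\<not> collinear {r2, W s, W t}" by (intro ncX assms(3)) simp
  have "1 - bb$1 - (2 - bb$2)*(s+t) - s*t = 1/2 - s/2 - t/2 - s*t" by (simp add: field_simps)
  moreover have "1/2 - s/2 - t/2 - s*t < 0" using b st by linarith
  ultimately have "1 - bb$1 - (2 - bb$2)*(s+t) - s*t < 0" by simp
  then show "\<not> collinear {bb, W s, W t}" by (intro ncX assms(3)) simp
qed

lemma ncD:
  assumes "s \<noteq> t" "s \<noteq> u" "t \<noteq> u"
  shows "\<not> collinear {W s, W t, W u}"
proof
  assume "collinear {W s, W t, W u}"
  from collinear_det[OF this]
  have e: "(1 + t^2 - (1 + s^2)) * (2 + u - (2 + s)) = (2 + t - (2 + s)) * (1 + u^2 - (1 + s^2))" by simp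
  have "(t - s) * (u - s) * (t - u) =
        (1 + t^2 - (1 + s^2)) * (2 + u - (2 + s)) - (2 + t - (2 + s)) * (1 + u^2 - (1 + s^2))"
    by (simp add: power2_eq_square algebra_simps)
  also have "\<dots> = 0" using e by simp
  finally show False using assms by simp
qed

definition SS :: "nat \<Rightarrow> point set" where "SS m = {r1, r2, bb} \<union> W ` PP m"

lemma cls: "x \<in> SS m \<Longrightarrow> x = r1 \<or> x = r2 \<or> x = bb \<or> (\<exists>t. t \<in> PP m \<and> x = W t)"
  unfolding SS_def by auto

lemma GP_SS: "general_position (SS m)"
  unfolding general_position_def
proof (intro ballI impI)
  fix a b c assume a: "a \<in> SS m" and b: "b \<in> SS m" and c: "c \<in> SS m"
    and d: "a \<noteq> b \<and> b \<noteq> c \<and> a \<noteq> c"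
  consider (S1) "a = r1" | (S2) "a = r2" | (S3) "a = bb" | (S4) t1 where "t1 \<in> PP m" "a = W t1" using cls[OF a] by blast
  then show "\<not> collinear {a,b,c}"
  proof cases
    case S1
    note Ca = S1
    consider (S1) "b = r1" | (S2) "b = r2" | (S3) "b = bb" | (S4) t2 where "t2 \<in> PP m" "b = W t2" using cls[OF b] by blast
    then show ?thesis
    proof cases
      case S1
      note Cb = S1
      consider (S1) "c = r1" | (S2) "c = r2" | (S3) "c = bb" | (S4) t3 where "t3 \<in> PP m" "c = W t3" using cls[OF c] by blast
      then show ?thesis
      proof cases
        case S1
        note Cc = S1
        show ?thesis using d Ca Cb Cc by simp
      next
        case S2
        note Cc = S2
        show ?thesis using d Ca Cb Cc by simp
      next
        case S3
        note Cc = S3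
        show ?thesis using d Ca Cb Cc by simp
      next
        case S4
        note Cc = S4(2)
        note \<open>t3 \<in> PP m\<close>
        show ?thesis using d Ca Cb Cc by simp
      qed
    next
      case S2
      note Cb = S2
      consider (S1) "c = r1" | (S2) "c = r2" | (S3) "c = bb" | (S4) t3 where "t3 \<in> PP m" "c = W t3" using cls[OF c] by blast
      then show ?thesis
      proof cases
        case S1
        note Cc = S1
        show ?thesis using d Ca Cb Cc by simp
      next
        case S2
        note Cc = S2
        show ?thesis using d Ca Cb Cc by simp
      next
        case S3
        note Cc = S3
        have eq: "{a,b,c} = {r1, r2, bb}" using Ca Cb Cc by auto
        show ?thesis unfolding eq by (rule ncA)
      next
        case S4
        note Cc = S4(2)
        note \<open>t3 \<in> PP m\<close>
        have eq: "{a,b,c} = {r1, r2, W t3}" using Ca Cb Cc by auto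
        show ?thesis unfolding eq by (rule ncB1[OF \<open>t3 \<in> PP m\<close>])
      qed
    next
      case S3
      note Cb = S3
      consider (S1) "c = r1" | (S2) "c = r2" | (S3) "c = bb" | (S4) t3 where "t3 \<in> PP m" "c = W t3" using cls[OF c] by blast
      then show ?thesis
      proof cases
        case S1
        note Cc = S1
        show ?thesis using d Ca Cb Cc by simp
      next
        case S2
        note Cc = S2
        have eq: "{a,b,c} = {r1, r2, bb}" using Ca Cb Cc by auto
        show ?thesis unfolding eq by (rule ncA)
      next
        case S3
        note Cc = S3
        show ?thesis using d Ca Cb Cc by simp
      next
        case S4
        note Cc = S4(2)
        note \<open>t3 \<in> PP m\<close>
        have eq: "{a,b,c} = {r1, bb, W t3}" using Ca Cb Cc by auto
        show ?thesis unfolding eq by (rule ncB2[OF \<open>t3 \<in> PP m\<close>])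
      qed
    next
      case S4
      note Cb = S4(2)
      note \<open>t2 \<in> PP m\<close>
      consider (S1) "c = r1" | (S2) "c = r2" | (S3) "c = bb" | (S4) t3 where "t3 \<in> PP m" "c = W t3" using cls[OF c] by blast
      then show ?thesis
      proof cases
        case S1
        note Cc = S1
        show ?thesis using d Ca Cb Cc by simp
      next
        case S2
        note Cc = S2
        have eq: "{a,b,c} = {r1, r2, W t2}" using Ca Cb Cc by auto
        show ?thesis unfolding eq by (rule ncB1[OF \<open>t2 \<in> PP m\<close>])
      next
        case S3
        note Cc = S3
        have eq: "{a,b,c} = {r1, bb, W t2}" using Ca Cb Cc by auto
        show ?thesis unfolding eq by (rule ncB2[OF \<open>t2 \<in> PP m\<close>])
      next
        case S4
        note Cc = S4(2)
        note \<open>t3 \<in> PP m\<close>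
        have eq: "{a,b,c} = {r1, W t2, W t3}" using Ca Cb Cc by auto
        have "t2 \<noteq> t3" using d Ca Cb Cc by auto
        show ?thesis unfolding eq by (rule ncC(1)[OF \<open>t2 \<in> PP m\<close> \<open>t3 \<in> PP m\<close> \<open>t2 \<noteq> t3\<close>])
      qed
    qed
  next
    case S2
    note Ca = S2
    consider (S1) "b = r1" | (S2) "b = r2" | (S3) "b = bb" | (S4) t2 where "t2 \<in> PP m" "b = W t2" using cls[OF b] by blast
    then show ?thesis
    proof cases
      case S1
      note Cb = S1
      consider (S1) "c = r1" | (S2) "c = r2" | (S3) "c = bb" | (S4) t3 where "t3 \<in> PP m" "c = W t3" using cls[OF c] by blast
      then show ?thesis
      proof cases
        case S1
        note Cc = S1
        show ?thesis using d Ca Cb Cc by simp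
      next
        case S2
        note Cc = S2
        show ?thesis using d Ca Cb Cc by simp
      next
        case S3
        note Cc = S3
        have eq: "{a,b,c} = {r1, r2, bb}" using Ca Cb Cc by auto
        show ?thesis unfolding eq by (rule ncA)
      next
        case S4
        note Cc = S4(2)
        note \<open>t3 \<in> PP m\<close>
        have eq: "{a,b,c} = {r1, r2, W t3}" using Ca Cb Cc by auto
        show ?thesis unfolding eq by (rule ncB1[OF \<open>t3 \<in> PP m\<close>])
      qed
    next
      case S2
      note Cb = S2
      consider (S1) "c = r1" | (S2) "c = r2" | (S3) "c = bb" | (S4) t3 where "t3 \<in> PP m" "c = W t3" using cls[OF c] by blast
      then show ?thesis
      proof cases
        case S1
        note Cc = S1
        show ?thesis using d Ca Cb Cc by simp
      next
        case S2
        note Cc = S2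
        show ?thesis using d Ca Cb Cc by simp
      next
        case S3
        note Cc = S3
        show ?thesis using d Ca Cb Cc by simp
      next
        case S4
        note Cc = S4(2)
        note \<open>t3 \<in> PP m\<close>
        show ?thesis using d Ca Cb Cc by simp
      qed
    next
      case S3
      note Cb = S3
      consider (S1) "c = r1" | (S2) "c = r2" | (S3) "c = bb" | (S4) t3 where "t3 \<in> PP m" "c = W t3" using cls[OF c] by blast
      then show ?thesis
      proof cases
        case S1
        note Cc = S1
        have eq: "{a,b,c} = {r1, r2, bb}" using Ca Cb Cc by auto
        show ?thesis unfolding eq by (rule ncA)
      next
        case S2
        note Cc = S2
        show ?thesis using d Ca Cb Cc by simp
      next
        case S3
        note Cc = S3
        show ?thesis using d Ca Cb Cc by simp
      next
        case S4
        note Cc = S4(2)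
        note \<open>t3 \<in> PP m\<close>
        have eq: "{a,b,c} = {r2, bb, W t3}" using Ca Cb Cc by auto
        show ?thesis unfolding eq by (rule ncB3[OF \<open>t3 \<in> PP m\<close>])
      qed
    next
      case S4
      note Cb = S4(2)
      note \<open>t2 \<in> PP m\<close>
      consider (S1) "c = r1" | (S2) "c = r2" | (S3) "c = bb" | (S4) t3 where "t3 \<in> PP m" "c = W t3" using cls[OF c] by blast
      then show ?thesis
      proof cases
        case S1
        note Cc = S1
        have eq: "{a,b,c} = {r1, r2, W t2}" using Ca Cb Cc by auto
        show ?thesis unfolding eq by (rule ncB1[OF \<open>t2 \<in> PP m\<close>])
      next
        case S2
        note Cc = S2
        show ?thesis using d Ca Cb Cc by simp
      next
        case S3
        note Cc = S3
        have eq: "{a,b,c} = {r2, bb, W t2}" using Ca Cb Cc by auto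
        show ?thesis unfolding eq by (rule ncB3[OF \<open>t2 \<in> PP m\<close>])
      next
        case S4
        note Cc = S4(2)
        note \<open>t3 \<in> PP m\<close>
        have eq: "{a,b,c} = {r2, W t2, W t3}" using Ca Cb Cc by auto
        have "t2 \<noteq> t3" using d Ca Cb Cc by auto
        show ?thesis unfolding eq by (rule ncC(2)[OF \<open>t2 \<in> PP m\<close> \<open>t3 \<in> PP m\<close> \<open>t2 \<noteq> t3\<close>])
      qed
    qed
  next
    case S3
    note Ca = S3
    consider (S1) "b = r1" | (S2) "b = r2" | (S3) "b = bb" | (S4) t2 where "t2 \<in> PP m" "b = W t2" using cls[OF b] by blast
    then show ?thesis
    proof cases
      case S1
      note Cb = S1
      consider (S1) "c = r1" | (S2) "c = r2" | (S3) "c = bb" | (S4) t3 where "t3 \<in> PP m" "c = W t3" using cls[OF c] by blast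
      then show ?thesis
      proof cases
        case S1
        note Cc = S1
        show ?thesis using d Ca Cb Cc by simp
      next
        case S2
        note Cc = S2
        have eq: "{a,b,c} = {r1, r2, bb}" using Ca Cb Cc by auto
        show ?thesis unfolding eq by (rule ncA)
      next
        case S3
        note Cc = S3
        show ?thesis using d Ca Cb Cc by simp
      next
        case S4
        note Cc = S4(2)
        note \<open>t3 \<in> PP m\<close>
        have eq: "{a,b,c} = {r1, bb, W t3}" using Ca Cb Cc by auto
        show ?thesis unfolding eq by (rule ncB2[OF \<open>t3 \<in> PP m\<close>])
      qed
    next
      case S2
      note Cb = S2
      consider (S1) "c = r1" | (S2) "c = r2" | (S3) "c = bb" | (S4) t3 where "t3 \<in> PP m" "c = W t3" using cls[OF c] by blast
      then show ?thesis
      proof cases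
        case S1
        note Cc = S1
        have eq: "{a,b,c} = {r1, r2, bb}" using Ca Cb Cc by auto
        show ?thesis unfolding eq by (rule ncA)
      next
        case S2
        note Cc = S2
        show ?thesis using d Ca Cb Cc by simp
      next
        case S3
        note Cc = S3
        show ?thesis using d Ca Cb Cc by simp
      next
        case S4
        note Cc = S4(2)
        note \<open>t3 \<in> PP m\<close>
        have eq: "{a,b,c} = {r2, bb, W t3}" using Ca Cb Cc by auto
        show ?thesis unfolding eq by (rule ncB3[OF \<open>t3 \<in> PP m\<close>])
      qed
    next
      case S3
      note Cb = S3
      consider (S1) "c = r1" | (S2) "c = r2" | (S3) "c = bb" | (S4) t3 where "t3 \<in> PP m" "c = W t3" using cls[OF c] by blast
      then show ?thesis
      proof cases
        case S1
        note Cc = S1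
        show ?thesis using d Ca Cb Cc by simp
      next
        case S2
        note Cc = S2
        show ?thesis using d Ca Cb Cc by simp
      next
        case S3
        note Cc = S3
        show ?thesis using d Ca Cb Cc by simp
      next
        case S4
        note Cc = S4(2)
        note \<open>t3 \<in> PP m\<close>
        show ?thesis using d Ca Cb Cc by simp
      qed
    next
      case S4
      note Cb = S4(2)
      note \<open>t2 \<in> PP m\<close>
      consider (S1) "c = r1" | (S2) "c = r2" | (S3) "c = bb" | (S4) t3 where "t3 \<in> PP m" "c = W t3" using cls[OF c] by blast
      then show ?thesis
      proof cases
        case S1
        note Cc = S1
        have eq: "{a,b,c} = {r1, bb, W t2}" using Ca Cb Cc by auto
        show ?thesis unfolding eq by (rule ncB2[OF \<open>t2 \<in> PP m\<close>])
      next
        case S2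
        note Cc = S2
        have eq: "{a,b,c} = {r2, bb, W t2}" using Ca Cb Cc by auto
        show ?thesis unfolding eq by (rule ncB3[OF \<open>t2 \<in> PP m\<close>])
      next
        case S3
        note Cc = S3
        show ?thesis using d Ca Cb Cc by simp
      next
        case S4
        note Cc = S4(2)
        note \<open>t3 \<in> PP m\<close>
        have eq: "{a,b,c} = {bb, W t2, W t3}" using Ca Cb Cc by auto
        have "t2 \<noteq> t3" using d Ca Cb Cc by auto
        show ?thesis unfolding eq by (rule ncC(3)[OF \<open>t2 \<in> PP m\<close> \<open>t3 \<in> PP m\<close> \<open>t2 \<noteq> t3\<close>])
      qed
    qed
  next
    case S4
    note Ca = S4(2)
    note \<open>t1 \<in> PP m\<close>
    consider (S1) "b = r1" | (S2) "b = r2" | (S3) "b = bb" | (S4) t2 where "t2 \<in> PP m" "b = W t2" using cls[OF b] by blast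
    then show ?thesis
    proof cases
      case S1
      note Cb = S1
      consider (S1) "c = r1" | (S2) "c = r2" | (S3) "c = bb" | (S4) t3 where "t3 \<in> PP m" "c = W t3" using cls[OF c] by blast
      then show ?thesis
      proof cases
        case S1
        note Cc = S1
        show ?thesis using d Ca Cb Cc by simp
      next
        case S2
        note Cc = S2
        have eq: "{a,b,c} = {r1, r2, W t1}" using Ca Cb Cc by auto
        show ?thesis unfolding eq by (rule ncB1[OF \<open>t1 \<in> PP m\<close>])
      next
        case S3
        note Cc = S3
        have eq: "{a,b,c} = {r1, bb, W t1}" using Ca Cb Cc by auto
        show ?thesis unfolding eq by (rule ncB2[OF \<open>t1 \<in> PP m\<close>])
      next
        case S4
        note Cc = S4(2)
        note \<open>t3 \<in> PP m\<close>
        have eq: "{a,b,c} = {r1, W t1, W t3}" using Ca Cb Cc by auto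
        have "t1 \<noteq> t3" using d Ca Cb Cc by auto
        show ?thesis unfolding eq by (rule ncC(1)[OF \<open>t1 \<in> PP m\<close> \<open>t3 \<in> PP m\<close> \<open>t1 \<noteq> t3\<close>])
      qed
    next
      case S2
      note Cb = S2
      consider (S1) "c = r1" | (S2) "c = r2" | (S3) "c = bb" | (S4) t3 where "t3 \<in> PP m" "c = W t3" using cls[OF c] by blast
      then show ?thesis
      proof cases
        case S1
        note Cc = S1
        have eq: "{a,b,c} = {r1, r2, W t1}" using Ca Cb Cc by auto
        show ?thesis unfolding eq by (rule ncB1[OF \<open>t1 \<in> PP m\<close>])
      next
        case S2
        note Cc = S2
        show ?thesis using d Ca Cb Cc by simp
      next
        case S3
        note Cc = S3
        have eq: "{a,b,c} = {r2, bb, W t1}" using Ca Cb Cc by auto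
        show ?thesis unfolding eq by (rule ncB3[OF \<open>t1 \<in> PP m\<close>])
      next
        case S4
        note Cc = S4(2)
        note \<open>t3 \<in> PP m\<close>
        have eq: "{a,b,c} = {r2, W t1, W t3}" using Ca Cb Cc by auto
        have "t1 \<noteq> t3" using d Ca Cb Cc by auto
        show ?thesis unfolding eq by (rule ncC(2)[OF \<open>t1 \<in> PP m\<close> \<open>t3 \<in> PP m\<close> \<open>t1 \<noteq> t3\<close>])
      qed
    next
      case S3
      note Cb = S3
      consider (S1) "c = r1" | (S2) "c = r2" | (S3) "c = bb" | (S4) t3 where "t3 \<in> PP m" "c = W t3" using cls[OF c] by blast
      then show ?thesis
      proof cases
        case S1
        note Cc = S1
        have eq: "{a,b,c} = {r1, bb, W t1}" using Ca Cb Cc by auto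
        show ?thesis unfolding eq by (rule ncB2[OF \<open>t1 \<in> PP m\<close>])
      next
        case S2
        note Cc = S2
        have eq: "{a,b,c} = {r2, bb, W t1}" using Ca Cb Cc by auto
        show ?thesis unfolding eq by (rule ncB3[OF \<open>t1 \<in> PP m\<close>])
      next
        case S3
        note Cc = S3
        show ?thesis using d Ca Cb Cc by simp
      next
        case S4
        note Cc = S4(2)
        note \<open>t3 \<in> PP m\<close>
        have eq: "{a,b,c} = {bb, W t1, W t3}" using Ca Cb Cc by auto
        have "t1 \<noteq> t3" using d Ca Cb Cc by auto
        show ?thesis unfolding eq by (rule ncC(3)[OF \<open>t1 \<in> PP m\<close> \<open>t3 \<in> PP m\<close> \<open>t1 \<noteq> t3\<close>])
      qed
    next
      case S4
      note Cb = S4(2)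
      note \<open>t2 \<in> PP m\<close>
      consider (S1) "c = r1" | (S2) "c = r2" | (S3) "c = bb" | (S4) t3 where "t3 \<in> PP m" "c = W t3" using cls[OF c] by blast
      then show ?thesis
      proof cases
        case S1
        note Cc = S1
        have eq: "{a,b,c} = {r1, W t1, W t2}" using Ca Cb Cc by auto
        have "t1 \<noteq> t2" using d Ca Cb Cc by auto
        show ?thesis unfolding eq by (rule ncC(1)[OF \<open>t1 \<in> PP m\<close> \<open>t2 \<in> PP m\<close> \<open>t1 \<noteq> t2\<close>])
      next
        case S2
        note Cc = S2
        have eq: "{a,b,c} = {r2, W t1, W t2}" using Ca Cb Cc by auto
        have "t1 \<noteq> t2" using d Ca Cb Cc by auto
        show ?thesis unfolding eq by (rule ncC(2)[OF \<open>t1 \<in> PP m\<close> \<open>t2 \<in> PP m\<close> \<open>t1 \<noteq> t2\<close>])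
      next
        case S3
        note Cc = S3
        have eq: "{a,b,c} = {bb, W t1, W t2}" using Ca Cb Cc by auto
        have "t1 \<noteq> t2" using d Ca Cb Cc by auto
        show ?thesis unfolding eq by (rule ncC(3)[OF \<open>t1 \<in> PP m\<close> \<open>t2 \<in> PP m\<close> \<open>t1 \<noteq> t2\<close>])
      next
        case S4
        note Cc = S4(2)
        note \<open>t3 \<in> PP m\<close>
        have eq: "{a,b,c} = {W t1, W t2, W t3}" using Ca Cb Cc by auto
        have "t1 \<noteq> t2" using d Ca Cb Cc by auto
        have "t1 \<noteq> t3" using d Ca Cb Cc by auto
        have "t2 \<noteq> t3" using d Ca Cb Cc by auto
        show ?thesis unfolding eq by (rule ncD[OF \<open>t1 \<noteq> t2\<close> \<open>t1 \<noteq> t3\<close> \<open>t2 \<noteq> t3\<close>])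
      qed
    qed
  qed
qed




definition RR :: "point \<Rightarrow> bool" where "RR p \<longleftrightarrow> p = r1 \<or> p = r2"
definition TT :: "nat \<Rightarrow> point set set" where
  "TT m = {{r1,bb},{r2,bb}} \<union> (\<lambda>t. {r2, W t}) ` PP m"

lemma W_ne' [simp]: "W t \<noteq> r1" "W t \<noteq> r2" "W t \<noteq> bb" "r1 \<noteq> W t" "r2 \<noteq> W t" "bb \<noteq> W t"
  using W_ne by metis+

lemma spec_ne' [simp]: "r1 \<noteq> r2" "r1 \<noteq> bb" "r2 \<noteq> bb" "r2 \<noteq> r1" "bb \<noteq> r1" "bb \<noteq> r2"
  using spec_ne by metis+

lemma W_eq [simp]: "W s = W t \<longleftrightarrow> s = t" using W_inj by blast

lemma SS_fin: "finite (SS m)" unfolding SS_def using PP_finite by simp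

lemma SS_card: "card (SS m) = m + 3"
proof -
  have cW: "card (W ` PP m) = m" using PP_card by (simp add: card_image inj_on_def)
  have "SS m = insert r1 (insert r2 (insert bb (W ` PP m)))" unfolding SS_def by auto
  moreover have "r1 \<notin> insert r2 (insert bb (W ` PP m))" "r2 \<notin> insert bb (W ` PP m)" "bb \<notin> W ` PP m"
    by auto
  ultimately show ?thesis using cW PP_finite by simp
qed

lemma mem_SS [simp]: "r1 \<in> SS m" "r2 \<in> SS m" "bb \<in> SS m" "t \<in> PP m \<Longrightarrow> W t \<in> SS m"
  unfolding SS_def by auto

lemma edge_length_2: "edge_length {a,b} = dist a b"
  unfolding edge_length_def
proof (rule the_equality)
  show "\<exists>x y. {a,b} = {x,y} \<and> dist a b = dist x y" by blast
  fix d assume "\<exists>x y. {a,b} = {x,y} \<and> d = dist x y"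
  then obtain x y where "{a,b} = {x,y}" "d = dist x y" by blast
  then show "d = dist a b" by (auto simp: doubleton_eq_iff dist_commute)
qed

lemma TT_cases: "f \<in> TT m \<longleftrightarrow> f = {r1,bb} \<or> f = {r2,bb} \<or> (\<exists>t. t \<in> PP m \<and> f = {r2, W t})"
  unfolding TT_def by auto

lemma not_conn:
  assumes cl: "\<And>x y. {x,y} \<in> T \<Longrightarrow> x \<noteq> y \<Longrightarrow> x \<in> X \<Longrightarrow> y \<in> X"
    and "u \<in> S" "v \<in> S" "u \<in> X" "v \<notin> X"
  shows "\<not> connected_graph S T"
proof
  assume "connected_graph S T"
  then have "(u,v) \<in> (grel T)\<^sup>*" using assms unfolding connected_graph_grel by simp
  from closed_reach[OF cl this assms(4)] assms(5) show False by simp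
qed

lemma TT_st: "spanning_tree (SS m) (TT m)"
  unfolding spanning_tree_def
proof (intro conjI ballI)
  fix e assume "e \<in> TT m"
  then consider "e = {r1,bb}" | "e = {r2,bb}" | t where "t \<in> PP m" "e = {r2, W t}"
    unfolding TT_cases by blast
  then show "is_edge_on (SS m) e"
  proof cases
    case 1 then show ?thesis unfolding is_edge_on_def by (intro exI[of _ r1] exI[of _ bb]) simp
  next
    case 2 then show ?thesis unfolding is_edge_on_def by (intro exI[of _ r2] exI[of _ bb]) simp
  next
    case 3 then show ?thesis unfolding is_edge_on_def by (intro exI[of _ r2] exI[of _ "W t"]) simp
  qed
next
  let ?R = "(grel (TT m))\<^sup>*"
  have e1: "(r1, bb) \<in> grel (TT m)" unfolding grel_def TT_def by simp
  have e2: "(bb, r2) \<in> grel (TT m)" unfolding grel_def TT_def by (simp add: insert_commute)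
  have toR: "(u, r2) \<in> ?R" if "u \<in> SS m" for u
  proof -
    from cls[OF that] consider "u = r1" | "u = r2" | "u = bb" | t where "t \<in> PP m" "u = W t" by blast
    then show ?thesis
    proof cases
      case 1 then show ?thesis using e1 e2 by (meson converse_rtrancl_into_rtrancl r_into_rtrancl)
    next
      case 2 then show ?thesis by simp
    next
      case 3 then show ?thesis using e2 by simp
    next
      case 4
      then have "(u, r2) \<in> grel (TT m)" unfolding grel_def TT_def by (auto simp: insert_commute)
      then show ?thesis by simp
    qed
  qed
  show "connected_graph (SS m) (TT m)" unfolding connected_graph_grel
  proof (intro ballI)
    fix u v assume "u \<in> SS m" "v \<in> SS m"
    then have "(u, r2) \<in> ?R" "(v, r2) \<in> ?R" using toR by auto
    then show "(u, v) \<in> ?R" using grel_sym by (meson rtrancl_trans)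
  qed
next
  fix e assume "e \<in> TT m"
  then consider "e = {r1,bb}" | "e = {r2,bb}" | t where "t \<in> PP m" "e = {r2, W t}"
    unfolding TT_cases by blast
  then show "\<not> connected_graph (SS m) (TT m - {e})"
  proof cases
    case 1
    show ?thesis
    proof (rule not_conn[where X="{r1}" and u=r1 and v=r2])
      fix x y assume "{x,y} \<in> TT m - {e}" "x \<noteq> y" "x \<in> {r1}"
      then show "y \<in> {r1}" using 1 by (auto simp: doubleton_eq_iff TT_cases)
    qed auto
  next
    case 2
    show ?thesis
    proof (rule not_conn[where X="{r1,bb}" and u=r1 and v=r2])
      fix x y assume "{x,y} \<in> TT m - {e}" "x \<noteq> y" "x \<in> {r1,bb}"
      then show "y \<in> {r1,bb}" using 2 by (auto simp: doubleton_eq_iff TT_cases)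
    qed auto
  next
    case 3
    show ?thesis
    proof (rule not_conn[where X="{W t}" and u="W t" and v=r2])
      fix x y assume "{x,y} \<in> TT m - {e}" "x \<noteq> y" "x \<in> {W t}"
      then show "y \<in> {W t}" using 3 by (auto simp: doubleton_eq_iff TT_cases)
    qed (use 3 in auto)
  qed
qed


lemma TT_bich: "bichromatic_spanning_tree (SS m) RR (TT m)"
  unfolding bichromatic_spanning_tree_def
proof (intro conjI TT_st ballI)
  fix e assume "e \<in> TT m"
  then consider "e = {r1,bb}" | "e = {r2,bb}" | t where "t \<in> PP m" "e = {r2, W t}"
    unfolding TT_cases by blast
  then show "\<exists>a b. e = {a, b} \<and> RR a \<and> \<not> RR b"
  proof cases
    case 1 then show ?thesis unfolding RR_def by (intro exI[of _ r1] exI[of _ bb]) simp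
  next
    case 2 then show ?thesis unfolding RR_def by (intro exI[of _ r2] exI[of _ bb]) simp
  next
    case 3 then show ?thesis unfolding RR_def by (intro exI[of _ r2] exI[of _ "W t"]) simp
  qed
qed

lemma pt_eq: "(x::real^2) = y \<longleftrightarrow> x$1 = y$1 \<and> x$2 = y$2"
  by (simp add: vec_eq_iff forall_2)

lemma cross_W:
  assumes t: "t \<in> PP m"
  shows "edges_cross {r1,bb} {r2, W t}"
proof -
  have tb: "1/2 \<le> t" "t < 1" using PP_bounds[OF t] by auto
  define q where "q = 1 + t^2"
  have q: "q > 0" "q \<ge> 1" unfolding q_def by (simp_all add: add_pos_nonneg)
  define y where "y = (2 + t) / (2 * q)"
  have y0: "y > 0" unfolding y_def using q tb by simp
  have "2 + t < 3 * q" unfolding q_def using tb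
  proof -
    have "t * t \<ge> t * (1/2)" using tb by (intro mult_left_mono) auto
    moreover have "t * t \<ge> 0" by simp
    moreover have "3 * (1 + t^2) = 3 + 3*(t*t)" by (simp add: power2_eq_square)
    ultimately show "2 + t < 3 * (1 + t^2)" using tb by linarith
  qed
  then have y1: "y < 3/2" unfolding y_def using q by (simp add: divide_less_eq)
  define u where "u = 1 / (2 * q)"
  define p where "p = u *\<^sub>R W t"
  have p1: "p$1 = 1/2" "p$2 = y" unfolding p_def u_def y_def q_def using q by (simp_all add: q_def)
  have "p \<in> open_segment r2 (W t)"
    unfolding in_segment
  proof (intro conjI exI[of _ u])
    show "r2 \<noteq> W t" by simp
    show "0 < u" "u < 1" unfolding u_def using q by simp_all
    show "p = (1 - u) *\<^sub>R r2 + u *\<^sub>R W t" unfolding pt_eq p_def by simp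
  qed
  moreover have "p \<in> open_segment r1 bb"
    unfolding in_segment
  proof (intro conjI exI[of _ "2 * (y + 10) / 23"])
    show "r1 \<noteq> bb" by simp
    show "0 < 2 * (y + 10) / 23" "2 * (y + 10) / 23 < 1" using y0 y1 by simp_all
    show "p = (1 - 2 * (y + 10) / 23) *\<^sub>R r1 + (2 * (y + 10) / 23) *\<^sub>R bb"
      unfolding pt_eq p1 by (simp add: field_simps)
  qed
  ultimately show ?thesis unfolding edges_cross_def by blast
qed

lemma TT_cross: "crossing_number (TT m) {r1,bb} = m"
proof -
  have GP: "general_position (SS m)" by (rule GP_SS)
  have "{f \<in> TT m. f \<noteq> {r1,bb} \<and> edges_cross {r1,bb} f} = (\<lambda>t. {r2, W t}) ` PP m"
  proof (intro equalityI subsetI)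
    fix f assume f: "f \<in> {f \<in> TT m. f \<noteq> {r1,bb} \<and> edges_cross {r1,bb} f}"
    have nc: "\<not> edges_cross {r1,bb} {r2,bb}"
      by (rule adj_no_cross[OF GP]) (auto simp: doubleton_eq_iff)
    from f nc show "f \<in> (\<lambda>t. {r2, W t}) ` PP m" unfolding TT_def by auto
  next
    fix f assume "f \<in> (\<lambda>t. {r2, W t}) ` PP m"
    then obtain t where t: "t \<in> PP m" "f = {r2, W t}" by blast
    then show "f \<in> {f \<in> TT m. f \<noteq> {r1,bb} \<and> edges_cross {r1,bb} f}"
      using cross_W[OF t(1)] unfolding TT_def by (auto simp: doubleton_eq_iff)
  qed
  moreover have "inj_on (\<lambda>t. {r2, W t}) (PP m)"
    unfolding inj_on_def by (auto simp: doubleton_eq_iff)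
  ultimately show ?thesis unfolding crossing_number_def using PP_card by (simp add: card_image)
qed


definition BB :: "nat \<Rightarrow> point set" where "BB m = insert bb (W ` PP m)"

lemma BB_eq: "BB m = SS m - {r1, r2}" unfolding BB_def SS_def by auto

lemma BB_fin: "finite (BB m)" unfolding BB_def using PP_finite by simp

lemma dist_D1: assumes "v \<in> BB m" shows "dist r2 v \<le> dist r1 v"
proof -
  from assms consider "v = bb" | t where "t \<in> PP m" "v = W t" unfolding BB_def by blast
  then show ?thesis
  proof cases
    case 1 then show ?thesis unfolding dist2 by (intro real_sqrt_le_mono) (simp add: power2_eq_square)
  next
    case 2
    have tb: "1/2 \<le> t" "t < 1" using PP_bounds[OF 2(1)] by auto
    have tt: "t * t \<le> 1" "t * t \<ge> 0" using tb by (simp_all add: mult_le_one)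
    have "(r2$1 - v$1)^2 + (r2$2 - v$2)^2 \<le> (r1$1 - v$1)^2 + (r1$2 - v$2)^2"
      using 2(2) tb tt by (simp add: power2_eq_square algebra_simps)
    then show ?thesis unfolding dist2 by (rule real_sqrt_le_mono)
  qed
qed

lemma dist_D2: assumes "v \<in> BB m" shows "dist r1 bb \<le> dist r1 v"
proof -
  from assms consider "v = bb" | t where "t \<in> PP m" "v = W t" unfolding BB_def by blast
  then show ?thesis
  proof cases
    case 1 then show ?thesis by simp
  next
    case 2
    have tb: "1/2 \<le> t" "t < 1" using PP_bounds[OF 2(1)] by auto
    have tt: "t * t \<ge> 0" by simp
    have "(r1$1 - bb$1)^2 + (r1$2 - bb$2)^2 \<le> (r1$1 - v$1)^2 + (r1$2 - v$2)^2"
      using 2(2) tb tt by (simp add: power2_eq_square algebra_simps)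
    then show ?thesis unfolding dist2 by (rule real_sqrt_le_mono)
  qed
qed


lemma TT_length: "tree_length (TT m) = dist r1 bb + (\<Sum>v\<in>BB m. dist r2 v)"
proof -
  let ?g = "\<lambda>t. {r2, W t}"
  have TT: "TT m = insert {r1,bb} (insert {r2,bb} (?g ` PP m))" unfolding TT_def by auto
  have n1: "{r1,bb} \<notin> insert {r2,bb} (?g ` PP m)" by (auto simp: doubleton_eq_iff)
  have n2: "{r2,bb} \<notin> ?g ` PP m" by (auto simp: doubleton_eq_iff)
  have inj: "inj_on ?g (PP m)" unfolding inj_on_def by (auto simp: doubleton_eq_iff)
  have fin: "finite (?g ` PP m)" using PP_finite by simp
  have "tree_length (TT m) = edge_length {r1,bb} + (edge_length {r2,bb} + (\<Sum>f\<in>?g ` PP m. edge_length f))"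
    unfolding tree_length_def TT using n1 n2 fin by simp
  also have "(\<Sum>f\<in>?g ` PP m. edge_length f) = (\<Sum>t\<in>PP m. dist r2 (W t))"
    using inj by (simp add: sum.reindex edge_length_2)
  also have "(\<Sum>t\<in>PP m. dist r2 (W t)) = (\<Sum>v\<in>W ` PP m. dist r2 v)"
    by (simp add: sum.reindex inj_on_def)
  finally have "tree_length (TT m) = dist r1 bb + (dist r2 bb + (\<Sum>v\<in>W ` PP m. dist r2 v))"
    by (simp add: edge_length_2)
  moreover have "(\<Sum>v\<in>BB m. dist r2 v) = dist r2 bb + (\<Sum>v\<in>W ` PP m. dist r2 v)"
    unfolding BB_def using PP_finite by (subst sum.insert) auto
  ultimately show ?thesis by simp
qed

lemma col2:
  assumes "bichromatic_spanning_tree S RR T'" "{x,y} \<in> T'"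
  shows "(RR x \<and> \<not> RR y) \<or> (RR y \<and> \<not> RR x)"
proof -
  obtain a b where "{x,y} = {a,b}" "RR a" "\<not> RR b"
    using assms unfolding bichromatic_spanning_tree_def by blast
  then show ?thesis by (auto simp: doubleton_eq_iff)
qed

lemma in_S:
  assumes "bichromatic_spanning_tree S RR T'" "f \<in> T'" "v \<in> f"
  shows "v \<in> S"
proof -
  have "is_edge_on S f" using assms unfolding bichromatic_spanning_tree_def spanning_tree_def by blast
  then show ?thesis using assms(3) unfolding is_edge_on_def by auto
qed

lemma TT_min:
  assumes bt: "bichromatic_spanning_tree (SS m) RR T'"
  shows "tree_length (TT m) \<le> tree_length T'"
proof -
  have st: "spanning_tree (SS m) T'" using bt unfolding bichromatic_spanning_tree_def by simp
  have conn: "connected_graph (SS m) T'" using st unfolding spanning_tree_def by simp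
  have "SS m \<noteq> {}" using mem_SS(1) by blast
  then have finT: "finite T'" using tree_card(1)[OF st SS_fin] by blast
  have RR1: "RR r1" "RR r2" unfolding RR_def by simp_all
  have RRB: "\<not> RR v" if "v \<in> BB m" for v using that unfolding BB_eq RR_def by auto
  have blue: "v \<in> BB m" if "f \<in> T'" "v \<in> f" "\<not> RR v" for f v
    using in_S[OF bt that(1,2)] that(3) unfolding BB_eq RR_def by auto
  have "\<exists>w0. {r1,w0} \<in> T' \<and> {r2,w0} \<in> T'"
  proof (rule ccontr)
    assume no: "\<not> (\<exists>w0. {r1,w0} \<in> T' \<and> {r2,w0} \<in> T')"
    let ?X = "insert r1 {v. {r1,v} \<in> T'}"
    have "\<not> connected_graph (SS m) T'"
    proof (rule not_conn[where X="?X" and u=r1 and v=r2])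
      fix x y assume xy: "{x,y} \<in> T'" "x \<noteq> y" "x \<in> ?X"
      show "y \<in> ?X"
      proof (cases "x = r1")
        case True then show ?thesis using xy by simp
      next
        case False
        then have e1: "{r1,x} \<in> T'" using xy by simp
        have "\<not> RR x" using col2[OF bt e1] RR1 by blast
        then have "RR y" using col2[OF bt xy(1)] by blast
        then have "y = r1 \<or> y = r2" unfolding RR_def by simp
        moreover have "y \<noteq> r2"
        proof
          assume "y = r2"
          then have "{r2,x} \<in> T'" using xy(1) by (simp add: insert_commute)
          then show False using no e1 by blast
        qed
        ultimately show ?thesis by simp
      qed
    next
      show "r2 \<notin> ?X"
      proof
        assume "r2 \<in> ?X"
        then have "{r1,r2} \<in> T'" by simp
        then show False using col2[OF bt] RR1 by blast
      qed
    qed simp_all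
    then show False using conn by simp
  qed
  then obtain w0 where w0: "{r1,w0} \<in> T'" "{r2,w0} \<in> T'" by blast
  have w0B: "w0 \<in> BB m" using col2[OF bt w0(1)] RR1 blue[OF w0(1)] by auto
  have hasE: "\<exists>f. f \<in> T' \<and> v \<in> f" if v: "v \<in> BB m" for v
  proof (rule ccontr)
    assume no: "\<not> (\<exists>f. f \<in> T' \<and> v \<in> f)"
    have "\<not> connected_graph (SS m) T'"
    proof (rule not_conn[where X="{v}" and u=v and v=r1])
      fix x y assume "{x,y} \<in> T'" "x \<noteq> y" "x \<in> {v}"
      then show "y \<in> {v}" using no by auto
    qed (use v in \<open>auto simp: BB_eq\<close>)
    then show False using conn by simp
  qed
  define pk where "pk v = (SOME f. f \<in> T' \<and> v \<in> f)" for v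
  have pk: "pk v \<in> T'" "v \<in> pk v" if "v \<in> BB m" for v
    using someI_ex[OF hasE[OF that]] unfolding pk_def by auto
  have pkform: "\<exists>x. RR x \<and> pk v = {x, v}" if v: "v \<in> BB m" for v
  proof -
    obtain a b where ab: "pk v = {a,b}" "RR a" "\<not> RR b"
      using bt pk(1)[OF v] unfolding bichromatic_spanning_tree_def by blast
    have "v = b" using pk(2)[OF v] ab RRB[OF v] by auto
    then show ?thesis using ab by blast
  qed
  have pklen: "dist r2 v \<le> edge_length (pk v)" if v: "v \<in> BB m" for v
  proof -
    obtain x where x: "RR x" "pk v = {x,v}" using pkform[OF v] by blast
    then have "x = r1 \<or> x = r2" unfolding RR_def by simp
    then have "dist r2 v \<le> dist x v" using dist_D1[OF v] by auto
    then show ?thesis using x by (simp add: edge_length_2)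
  qed
  define Bw where "Bw = BB m - {w0}"
  have finBw: "finite Bw" unfolding Bw_def using BB_fin by simp
  have pkinj: "inj_on pk Bw"
  proof (rule inj_onI)
    fix v v' assume vv: "v \<in> Bw" "v' \<in> Bw" "pk v = pk v'"
    have vB: "v \<in> BB m" "v' \<in> BB m" using vv unfolding Bw_def by auto
    obtain x where x: "RR x" "pk v = {x,v}" using pkform[OF vB(1)] by blast
    have "v' \<in> {x,v}" using pk(2)[OF vB(2)] vv(3) x(2) by simp
    moreover have "v' \<noteq> x" using x(1) RRB[OF vB(2)] by auto
    ultimately show "v = v'" by simp
  qed
  have pkw0: "pk v \<noteq> {r1,w0}" "pk v \<noteq> {r2,w0}" if v: "v \<in> Bw" for v
  proof -
    have vB: "v \<in> BB m" "v \<noteq> w0" using v unfolding Bw_def by auto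
    have "v \<noteq> r1" "v \<noteq> r2" using RRB[OF vB(1)] RR1 by auto
    then show "pk v \<noteq> {r1,w0}" "pk v \<noteq> {r2,w0}" using pk(2)[OF vB(1)] vB(2) by auto
  qed
  have w0ne: "{r1,w0} \<noteq> {r2,w0}" by (auto simp: doubleton_eq_iff)
  define E0 where "E0 = insert {r1,w0} (insert {r2,w0} (pk ` Bw))"
  have E0sub: "E0 \<subseteq> T'" unfolding E0_def using w0 pk(1) unfolding Bw_def by auto
  have nonneg: "\<forall>f\<in>T' - E0. 0 \<le> edge_length f"
  proof
    fix f assume "f \<in> T' - E0"
    then have "is_edge_on (SS m) f" using st unfolding spanning_tree_def by blast
    then show "0 \<le> edge_length f" unfolding is_edge_on_def by (auto simp: edge_length_2)
  qed
  have "(\<Sum>f\<in>E0. edge_length f) \<le> tree_length T'"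
    unfolding tree_length_def by (rule sum_mono2[OF finT E0sub]) (use nonneg in blast)
  moreover have "(\<Sum>f\<in>E0. edge_length f) =
      dist r1 w0 + (dist r2 w0 + (\<Sum>v\<in>Bw. edge_length (pk v)))"
  proof -
    have n1: "{r1,w0} \<notin> insert {r2,w0} (pk ` Bw)" using w0ne pkw0 by auto
    have n2: "{r2,w0} \<notin> pk ` Bw" using pkw0 by auto
    have "(\<Sum>f\<in>E0. edge_length f) = edge_length {r1,w0} + (edge_length {r2,w0} + (\<Sum>f\<in>pk ` Bw. edge_length f))"
      unfolding E0_def using n1 n2 finBw by simp
    also have "(\<Sum>f\<in>pk ` Bw. edge_length f) = (\<Sum>v\<in>Bw. edge_length (pk v))"
      using pkinj by (simp add: sum.reindex)
    finally show ?thesis by (simp add: edge_length_2)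
  qed
  moreover have "(\<Sum>v\<in>Bw. dist r2 v) \<le> (\<Sum>v\<in>Bw. edge_length (pk v))"
    by (rule sum_mono) (use pklen in \<open>auto simp: Bw_def\<close>)
  moreover have "(\<Sum>v\<in>BB m. dist r2 v) = dist r2 w0 + (\<Sum>v\<in>Bw. dist r2 v)"
    unfolding Bw_def using BB_fin w0B by (simp add: sum.remove)
  moreover have "dist r1 bb \<le> dist r1 w0" by (rule dist_D2[OF w0B])
  ultimately show ?thesis unfolding TT_length by linarith
qed


theorem proposition7:
  fixes n :: nat
  assumes "n \<ge> 3"
  shows "(\<forall>(S::point set) (red::point \<Rightarrow> bool) T.
            finite S \<and> card S = n \<and> general_position S \<and>
            (\<exists>p\<in>S. red p) \<and> (\<exists>q\<in>S. \<not> red q) \<and>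
            min_bichromatic_spanning_tree S red T \<longrightarrow>
            (\<forall>e\<in>T. crossing_number T e \<le> n - 3))
       \<and> (\<exists>(S::point set) (red::point \<Rightarrow> bool) T.
            finite S \<and> card S = n \<and> general_position S \<and>
            min_bichromatic_spanning_tree S red T \<and>
            (\<exists>e\<in>T. crossing_number T e = n - 3))"
proof (intro conjI allI impI ballI)
  fix S :: "point set" and red T e
  assume h: "finite S \<and> card S = n \<and> general_position S \<and>
            (\<exists>p\<in>S. red p) \<and> (\<exists>q\<in>S. \<not> red q) \<and> min_bichromatic_spanning_tree S red T"
    and e: "e \<in> T"
  show "crossing_number T e \<le> n - 3"
    using part1[of S n red T e] h e assms by blast
next
  let ?m = "n - 3"
  have c: "card (SS ?m) = n" using SS_card assms by simp
  have mt: "min_bichromatic_spanning_tree (SS ?m) RR (TT ?m)"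
    unfolding min_bichromatic_spanning_tree_def using TT_bich TT_min by blast
  have "{r1,bb} \<in> TT ?m" unfolding TT_def by simp
  then have "\<exists>e\<in>TT ?m. crossing_number (TT ?m) e = n - 3" using TT_cross by blast
  then show "\<exists>(S::point set) (red::point \<Rightarrow> bool) T.
            finite S \<and> card S = n \<and> general_position S \<and>
            min_bichromatic_spanning_tree S red T \<and>
            (\<exists>e\<in>T. crossing_number T e = n - 3)"
    using SS_fin c GP_SS mt by blast
qed

end
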